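(* Let $\mathcal M=(W,W_\bot,\preccurlyeq,\sqsubseteq,V)$ be a bi-intuitionistic model of finite height $n$, and let $\Sigma$ be a finite set of formulas with $\#\Sigma=s$. Then the number of $\sim_\Sigma$-equivalence classes satisfies $\#(W/{\sim_\Sigma})\le 2^{2(n+1)s}_{n+2}$.
   Context: Formulas: $p\mid\bot\mid\varphi\wedge\psi\mid\varphi\vee\psi\mid\varphi\to\psi\mid\Diamond\varphi\mid\Box\varphi$ over a countably infinite set $\mathbb P$. A bi-intuitionistic model $(W,W_\bot,\preccurlyeq,\sqsubseteq,V)$: $\preccurlyeq,\sqsubseteq$ preorders on $W$, $W_\bot$ upward closed under both, $V:\mathbb P\to2^W$ with $V(p)$ $\preccurlyeq$-upward closed and $\supseteq W_\bot$. Satisfaction: $p$ iff $w\in V(p)$; $\bot$ iff $w\in W_\bot$; $\wedge,\vee$ pointwise; $w\models\varphi\to\psi$ iff for all $v\succcurlyeq w$, $v\models\varphi$ implies $v\models\psi$; $w\models\Diamond\varphi$ iff for all $u\succcurlyeq w$ there is $v\sqsupseteq u$ with $v\models\varphi$; $w\models\Box\varphi$ iff $v\models\varphi$ whenever $w\preccurlyeq u\sqsubseteq v$. $w\prec v$ means $w\preccurlyeq v$ and $v\not\preccurlyeq w$. The height of $w$ is the supremum of $n$ such that there is a chain $w=w_0\prec\cdots\prec w_n$; the height of $\mathcal M$ is the supremum of heights of its worlds. For $R\subseteq W\times W$: forward confluent if $w\preccurlyeq w'$, $wRv$ imply some $v'$ with $v\preccurlyeq v'$, $w'Rv'$; backward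 confluent if $wRv\preccurlyeq v'$ implies some $w'$ with $w\preccurlyeq w'Rv'$. The $\Sigma$-label of $w$ is $\ell(w)=(\ell^+(w);\ell^\Diamond(w))$ with $\ell^+(w)=\{\varphi\in\Sigma:(\mathcal M,w)\models\varphi\}$, $\ell^\Diamond(w)=\{\varphi\in\Sigma:\forall v\sqsupseteq w,\ (\mathcal M,v)\not\models\varphi\}$. A $\Sigma$-bisimulation is a forward and backward confluent $Z\subseteq W\times W$ with $wZv\Rightarrow\ell(w)=\ell(v)$; $\sim_\Sigma$ is the greatest $\Sigma$-bisimulation (the union of all of them), which is an equivalence relation. Superexponential: $2^x_0=x$ and $2^x_{y+1}=2^{2^x_y}$. *)

theory Defs
  imports Main
begin

datatype fm = Atom nat | Bot | And fm fm | Or fm fm | Imp fm fm | Dia fm | Box fm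

definition preorder_rel :: "'w set \<Rightarrow> ('w \<times> 'w) set \<Rightarrow> bool" where
  "preorder_rel W R \<longleftrightarrow> R \<subseteq> W \<times> W \<and> (\<forall>w\<in>W. (w, w) \<in> R) \<and> trans R"

definition bi_model :: "'w set \<Rightarrow> 'w set \<Rightarrow> ('w \<times> 'w) set \<Rightarrow> ('w \<times> 'w) set \<Rightarrow> (nat \<Rightarrow> 'w set) \<Rightarrow> bool" where
  "bi_model W Wb le sq V \<longleftrightarrow>
     preorder_rel W le \<and> preorder_rel W sq \<and> Wb \<subseteq> W \<and>
     (\<forall>w v. w \<in> Wb \<and> (w, v) \<in> le \<longrightarrow> v \<in> Wb) \<and>
     (\<forall>w v. w \<in> Wb \<and> (w, v) \<in> sq \<longrightarrow> v \<in> Wb) \<and>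
     (\<forall>p. V p \<subseteq> W \<and> Wb \<subseteq> V p \<and> (\<forall>w v. w \<in> V p \<and> (w, v) \<in> le \<longrightarrow> v \<in> V p))"

primrec sat :: "'w set \<Rightarrow> 'w set \<Rightarrow> ('w \<times> 'w) set \<Rightarrow> ('w \<times> 'w) set \<Rightarrow> (nat \<Rightarrow> 'w set) \<Rightarrow> 'w \<Rightarrow> fm \<Rightarrow> bool" where
  "sat W Wb le sq V w (Atom p) = (w \<in> V p)"
| "sat W Wb le sq V w Bot = (w \<in> Wb)"
| "sat W Wb le sq V w (And a b) = (sat W Wb le sq V w a \<and> sat W Wb le sq V w b)"
| "sat W Wb le sq V w (Or a b) = (sat W Wb le sq V w a \<or> sat W Wb le sq V w b)"
| "sat W Wb le sq V w (Imp a b) =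
     (\<forall>v. (w, v) \<in> le \<longrightarrow> sat W Wb le sq V v a \<longrightarrow> sat W Wb le sq V v b)"
| "sat W Wb le sq V w (Dia a) =
     (\<forall>u. (w, u) \<in> le \<longrightarrow> (\<exists>v. (u, v) \<in> sq \<and> sat W Wb le sq V v a))"
| "sat W Wb le sq V w (Box a) =
     (\<forall>u v. (w, u) \<in> le \<longrightarrow> (u, v) \<in> sq \<longrightarrow> sat W Wb le sq V v a)"

definition strict_le :: "('w \<times> 'w) set \<Rightarrow> 'w \<Rightarrow> 'w \<Rightarrow> bool" where
  "strict_le le w v \<longleftrightarrow> (w, v) \<in> le \<and> (v, w) \<notin> le"

definition has_chain :: "'w set \<Rightarrow> ('w \<times> 'w) set \<Rightarrow> 'w \<Rightarrow> nat \<Rightarrow> bool" where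
  "has_chain W le w k \<longleftrightarrow>
     (\<exists>f :: nat \<Rightarrow> 'w. f 0 = w \<and> (\<forall>i\<le>k. f i \<in> W) \<and> (\<forall>i<k. strict_le le (f i) (f (Suc i))))"

definition model_height :: "'w set \<Rightarrow> ('w \<times> 'w) set \<Rightarrow> nat \<Rightarrow> bool" where
  "model_height W le n \<longleftrightarrow>
     (\<exists>w\<in>W. has_chain W le w n) \<and> (\<forall>w\<in>W. \<forall>k. has_chain W le w k \<longrightarrow> k \<le> n)"

definition label_pos :: "'w set \<Rightarrow> 'w set \<Rightarrow> ('w \<times> 'w) set \<Rightarrow> ('w \<times> 'w) set \<Rightarrow> (nat \<Rightarrow> 'w set) \<Rightarrow> fm set \<Rightarrow> 'w \<Rightarrow> fm set" where
  "label_pos W Wb le sq V \<Sigma> w = {\<phi> \<in> \<Sigma>. sat W Wb le sq V w \<phi>}"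

definition label_dia :: "'w set \<Rightarrow> 'w set \<Rightarrow> ('w \<times> 'w) set \<Rightarrow> ('w \<times> 'w) set \<Rightarrow> (nat \<Rightarrow> 'w set) \<Rightarrow> fm set \<Rightarrow> 'w \<Rightarrow> fm set" where
  "label_dia W Wb le sq V \<Sigma> w = {\<phi> \<in> \<Sigma>. \<forall>v. (w, v) \<in> sq \<longrightarrow> \<not> sat W Wb le sq V v \<phi>}"

definition forward_confluent :: "('w \<times> 'w) set \<Rightarrow> ('w \<times> 'w) set \<Rightarrow> bool" where
  "forward_confluent le R \<longleftrightarrow>
     (\<forall>w w' v. (w, w') \<in> le \<and> (w, v) \<in> R \<longrightarrow> (\<exists>v'. (v, v') \<in> le \<and> (w', v') \<in> R))"

definition backward_confluent :: "('w \<times> 'w) set \<Rightarrow> ('w \<times> 'w) set \<Rightarrow> bool" where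
  "backward_confluent le R \<longleftrightarrow>
     (\<forall>w v v'. (w, v) \<in> R \<and> (v, v') \<in> le \<longrightarrow> (\<exists>w'. (w, w') \<in> le \<and> (w', v') \<in> R))"

definition sigma_bisim :: "'w set \<Rightarrow> 'w set \<Rightarrow> ('w \<times> 'w) set \<Rightarrow> ('w \<times> 'w) set \<Rightarrow> (nat \<Rightarrow> 'w set) \<Rightarrow> fm set \<Rightarrow> ('w \<times> 'w) set \<Rightarrow> bool" where
  "sigma_bisim W Wb le sq V \<Sigma> Z \<longleftrightarrow>
     Z \<subseteq> W \<times> W \<and> forward_confluent le Z \<and> backward_confluent le Z \<and>
     (\<forall>w v. (w, v) \<in> Z \<longrightarrow>
        label_pos W Wb le sq V \<Sigma> w = label_pos W Wb le sq V \<Sigma> v \<and>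
        label_dia W Wb le sq V \<Sigma> w = label_dia W Wb le sq V \<Sigma> v)"

definition sigma_sim :: "'w set \<Rightarrow> 'w set \<Rightarrow> ('w \<times> 'w) set \<Rightarrow> ('w \<times> 'w) set \<Rightarrow> (nat \<Rightarrow> 'w set) \<Rightarrow> fm set \<Rightarrow> ('w \<times> 'w) set" where
  "sigma_sim W Wb le sq V \<Sigma> = \<Union> {Z. sigma_bisim W Wb le sq V \<Sigma> Z}"

primrec sexp :: "nat \<Rightarrow> nat \<Rightarrow> nat" where
  "sexp x 0 = x"
| "sexp x (Suc y) = 2 ^ sexp x y"

end

theory Submission
  imports Defs
begin

lemma arith_key: "(a::nat) \<ge> 1 \<Longrightarrow> b \<ge> 1 \<Longrightarrow> a + b \<le> a * b + 1"
proof -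
  assume "a \<ge> 1" "b \<ge> 1"
  then obtain a' b' where "a = Suc a'" "b = Suc b'" by (metis Suc_le_D One_nat_def)
  then show ?thesis by simp
qed

lemma sexp_pos: "x \<ge> 1 \<Longrightarrow> sexp x m \<ge> 1"
  by (induction m) auto

lemma sexp_add: "sexp x m + d \<le> sexp (x + d) m"
proof (induction m)
  case 0 then show ?case by simp
next
  case (Suc m)
  have "2 ^ sexp x m + d \<le> 2 ^ sexp x m + 2 ^ d - 1"
    using less_exp[of d] by linarith
  also have "\<dots> \<le> 2 ^ sexp x m * 2 ^ d"
    using arith_key[of "2 ^ sexp x m" "2 ^ d"] by simp
  also have "\<dots> = 2 ^ (sexp x m + d)" by (simp add: power_add)
  also have "\<dots> \<le> 2 ^ sexp (x + d) m" using Suc by (intro power_increasing) auto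
  finally show ?case by simp
qed

lemma sexp_add2: "sexp x (Suc m) + 2 ^ d - 1 \<le> sexp (x + d) (Suc m)"
proof -
  have "sexp x (Suc m) + 2 ^ d - 1 \<le> 2 ^ sexp x m * 2 ^ d"
    using arith_key[of "2 ^ sexp x m" "2 ^ d"] by simp
  also have "\<dots> = 2 ^ (sexp x m + d)" by (simp add: power_add)
  also have "\<dots> \<le> 2 ^ sexp (x + d) m" using sexp_add[of x m d] by (intro power_increasing) auto
  finally show ?thesis by simp
qed

lemma pow_ineq: "2 * s + 2 ^ s \<le> (2::nat) ^ (2 * s)"
proof (induction s)
  case 0 then show ?case by simp
next
  case (Suc s)
  have "(2::nat) ^ (2 * Suc s) = 4 * 2 ^ (2 * s)" by (simp add: power_mult)
  moreover have "(1::nat) \<le> 2 ^ s" by simp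
  moreover have "(2::nat) ^ Suc s = 2 * 2 ^ s" by simp
  moreover have "2 * Suc s = 2 * s + 2" by simp
  ultimately show ?case using Suc by linarith
qed


definition LocSetG :: "fm set \<Rightarrow> (fm set \<times> fm set set \<times> fm set) set" where
  "LocSetG S = (\<lambda>(P, (a, E)). (P, insert a E, a)) ` (Pow S \<times> Sigma (Pow S) (\<lambda>a. Pow (Pow S - {a})))"

locale bm =
  fixes W Wb :: "'w set" and le sq :: "('w \<times> 'w) set" and V :: "nat \<Rightarrow> 'w set"
    and S :: "fm set"
  assumes bm: "bi_model W Wb le sq V" and finS: "finite S"
begin

lemma pre_le: "preorder_rel W le" using bm by (simp add: bi_model_def)

lemma le_W: "(w, v) \<in> le \<Longrightarrow> w \<in> W \<and> v \<in> W"
  using pre_le unfolding preorder_rel_def by (meson SigmaD1 SigmaD2 subsetD)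

lemma le_refl: "w \<in> W \<Longrightarrow> (w, w) \<in> le"
  using pre_le unfolding preorder_rel_def by simp

lemma le_trans: "(u, v) \<in> le \<Longrightarrow> (v, w) \<in> le \<Longrightarrow> (u, w) \<in> le"
  using pre_le unfolding preorder_rel_def by (meson transD)

lemma Wb_up0: "\<forall>w v. w \<in> Wb \<and> (w, v) \<in> le \<longrightarrow> v \<in> Wb"
  using bm unfolding bi_model_def by (elim conjE)

lemma Wb_up: "w \<in> Wb \<Longrightarrow> (w, v) \<in> le \<Longrightarrow> v \<in> Wb"
  using Wb_up0 by blast

lemma V_up0: "\<forall>p. V p \<subseteq> W \<and> Wb \<subseteq> V p \<and> (\<forall>w v. w \<in> V p \<and> (w, v) \<in> le \<longrightarrow> v \<in> V p)"
  using bm unfolding bi_model_def by (elim conjE)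

lemma V_up: "w \<in> V p \<Longrightarrow> (w, v) \<in> le \<Longrightarrow> v \<in> V p"
  using V_up0 by blast

lemma persist: "(w, v) \<in> le \<Longrightarrow> sat W Wb le sq V w \<phi> \<Longrightarrow> sat W Wb le sq V v \<phi>"
proof (induction \<phi> arbitrary: w v)
  case (Atom p) then show ?case using V_up by simp
next
  case Bot then show ?case using Wb_up by simp
next
  case (Imp a b) then show ?case by (simp; meson le_trans)
next
  case (Dia a) then show ?case by (simp; meson le_trans)
next
  case (Box a) then show ?case by (simp; meson le_trans)
next
  case (And a b) then show ?case by simp
next
  case (Or a b) then show ?case by auto
qed

definition lp where "lp w = label_pos W Wb le sq V S w"
definition ld where "ld w = label_dia W Wb le sq V S w"
definition Dc where "Dc w = {ld u | u. (w, u) \<in> le \<and> (u, w) \<in> le}"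
definition loc where "loc w = (lp w, Dc w, ld w)"

primrec sig :: "nat \<Rightarrow> 'w \<Rightarrow> (fm set \<times> fm set set \<times> fm set) \<times> 'w set set" where
  "sig 0 w = (loc w, {})"
| "sig (Suc k) w = (loc w, {{v \<in> W. sig k v = sig k u} | u. strict_le le w u})"

definition hgt_le where "hgt_le w k \<longleftrightarrow> (\<forall>m. has_chain W le w m \<longrightarrow> m \<le> k)"

lemma chain_ext:
  assumes "has_chain W le u m" "w \<in> W" "strict_le le w u"
  shows "has_chain W le w (Suc m)"
proof -
  obtain f where f: "f 0 = u" "\<forall>i\<le>m. f i \<in> W" "\<forall>i<m. strict_le le (f i) (f (Suc i))"
    using assms(1) unfolding has_chain_def by blast
  define g where "g i = (if i = 0 then w else f (i - 1))" for i
  have "g 0 = w" by (simp add: g_def)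
  moreover have "\<forall>i\<le>Suc m. g i \<in> W"
    using f assms(2) by (auto simp: g_def)
  moreover have "\<forall>i<Suc m. strict_le le (g i) (g (Suc i))"
  proof (intro allI impI)
    fix i assume "i < Suc m"
    then show "strict_le le (g i) (g (Suc i))"
      using f assms(3) by (cases i) (auto simp: g_def)
  qed
  ultimately show ?thesis unfolding has_chain_def by blast
qed

lemma hgt_strict:
  assumes "hgt_le w (Suc k)" "w \<in> W" "strict_le le w u"
  shows "hgt_le u k"
  unfolding hgt_le_def
proof (intro allI impI)
  fix m assume "has_chain W le u m"
  then have "has_chain W le w (Suc m)" using chain_ext assms(2,3) by blast
  then show "m \<le> k" using assms(1) unfolding hgt_le_def by fastforce
qed

lemma hgt_zero:
  assumes "hgt_le w 0" "w \<in> W" "strict_le le w u"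
  shows False
proof -
  have "u \<in> W" using assms(3) le_W unfolding strict_le_def by blast
  then have "has_chain W le u 0" unfolding has_chain_def by (intro exI[of _ "\<lambda>_. u"]) auto
  then have "has_chain W le w 1" using chain_ext assms by simp
  then show False using assms(1) unfolding hgt_le_def by force
qed

lemma sig_step:
  "\<forall>u u'. u \<in> W \<longrightarrow> u' \<in> W \<longrightarrow> hgt_le u k \<longrightarrow> hgt_le u' k \<longrightarrow> sig k u = sig k u'
     \<longrightarrow> sig (Suc k) u = sig (Suc k) u'"
proof (induction k)
  case 0
  show ?case
  proof (intro allI impI)
    fix u u' assume h: "u \<in> W" "u' \<in> W" "hgt_le u 0" "hgt_le u' 0" "sig 0 u = sig 0 u'"
    have "{u''. strict_le le u u''} = {}" using hgt_zero[OF h(3) h(1)] by blast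
    moreover have "{u''. strict_le le u' u''} = {}" using hgt_zero[OF h(4) h(2)] by blast
    ultimately show "sig (Suc 0) u = sig (Suc 0) u'" using h(5) by simp
  qed
next
  case (Suc k)
  show ?case
  proof (intro allI impI)
    fix u u' assume h: "u \<in> W" "u' \<in> W" "hgt_le u (Suc k)" "hgt_le u' (Suc k)"
      "sig (Suc k) u = sig (Suc k) u'"
    have loc: "loc u = loc u'" using h(5) by simp
    have ups: "{{v \<in> W. sig k v = sig k x} | x. strict_le le u x}
             = {{v \<in> W. sig k v = sig k x} | x. strict_le le u' x}" using h(5) by simp
    have key: "{{v \<in> W. sig (Suc k) v = sig (Suc k) x} | x. strict_le le a x}
             \<subseteq> {{v \<in> W. sig (Suc k) v = sig (Suc k) x} | x. strict_le le b x}"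
      if ab: "a \<in> W" "b \<in> W" "hgt_le a (Suc k)" "hgt_le b (Suc k)"
        "{{v \<in> W. sig k v = sig k x} | x. strict_le le a x}
             = {{v \<in> W. sig k v = sig k x} | x. strict_le le b x}" for a b
    proof
      fix C assume "C \<in> {{v \<in> W. sig (Suc k) v = sig (Suc k) x} | x. strict_le le a x}"
      then obtain x where x: "strict_le le a x" "C = {v \<in> W. sig (Suc k) v = sig (Suc k) x}" by blast
      have xW: "x \<in> W" using x(1) le_W unfolding strict_le_def by blast
      have "{v \<in> W. sig k v = sig k x} \<in> {{v \<in> W. sig k v = sig k x} | x. strict_le le b x}"
        using ab(5) x(1) by blast
      then obtain x' where x': "strict_le le b x'" "{v \<in> W. sig k v = sig k x} = {v \<in> W. sig k v = sig k x'}"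
        by blast
      have x'W: "x' \<in> W" using x'(1) le_W unfolding strict_le_def by blast
      have "sig k x = sig k x'" using x'(2) xW by blast
      moreover have "hgt_le x k" using hgt_strict ab x(1) by blast
      moreover have "hgt_le x' k" using hgt_strict ab x'(1) by blast
      ultimately have "sig (Suc k) x = sig (Suc k) x'" using Suc.IH xW x'W by blast
      then show "C \<in> {{v \<in> W. sig (Suc k) v = sig (Suc k) x} | x. strict_le le b x}"
        using x x' by auto
    qed
    have "{{v \<in> W. sig (Suc k) v = sig (Suc k) x} | x. strict_le le u x}
        = {{v \<in> W. sig (Suc k) v = sig (Suc k) x} | x. strict_le le u' x}"
      using key[OF h(1-4) ups] key[OF h(2,1,4,3) ups[symmetric]] by blast
    then show "sig (Suc (Suc k)) u = sig (Suc (Suc k)) u'" using loc by simp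
  qed
qed

end

context bm begin

lemma strict_iff:
  assumes "(w, w') \<in> le" "(w', w) \<in> le"
  shows "strict_le le w' u \<longleftrightarrow> strict_le le w u"
  using assms le_trans unfolding strict_le_def by blast

lemma cluster_lp:
  assumes "(w, w') \<in> le" "(w', w) \<in> le"
  shows "lp w' = lp w"
  using assms persist unfolding lp_def label_pos_def by blast

lemma cluster_Dc:
  assumes "(w, w') \<in> le" "(w', w) \<in> le"
  shows "Dc w' = Dc w"
  using assms le_trans unfolding Dc_def by blast

lemma ld_S: "ld w \<subseteq> S" unfolding ld_def label_dia_def by auto
lemma lp_S: "lp w \<subseteq> S" unfolding lp_def label_pos_def by auto

lemma ld_Dc: "w \<in> W \<Longrightarrow> ld w \<in> Dc w"
  using le_refl unfolding Dc_def by blast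

lemma Dc_S: "Dc w \<subseteq> Pow S" using ld_S unfolding Dc_def by blast

abbreviation LocSet where "LocSet \<equiv> LocSetG S"

lemma loc_in: "w \<in> W \<Longrightarrow> loc w \<in> LocSet"
proof -
  assume w: "w \<in> W"
  have "(lp w, (ld w, Dc w - {ld w})) \<in> Pow S \<times> Sigma (Pow S) (\<lambda>a. Pow (Pow S - {a}))"
    using lp_S ld_S Dc_S by blast
  moreover have "loc w = (\<lambda>(P, (a, E)). (P, insert a E, a)) (lp w, (ld w, Dc w - {ld w}))"
    using ld_Dc[OF w] by (auto simp: loc_def)
  ultimately show ?thesis unfolding LocSetG_def by blast
qed

lemma LocSet_card: "finite LocSet \<and> card LocSet \<le> 2 ^ (2 * card S + 2 ^ card S - 1)"
proof -
  let ?s = "card S"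
  have f1: "finite (Sigma (Pow S) (\<lambda>a. Pow (Pow S - {a})))" using finS by auto
  have "card (Sigma (Pow S) (\<lambda>a. Pow (Pow S - {a}))) = (\<Sum>a\<in>Pow S. card (Pow (Pow S - {a})))"
    using finS by (subst card_SigmaI) auto
  also have "\<dots> = (\<Sum>a\<in>Pow S. 2 ^ (2 ^ ?s - 1))"
  proof (rule sum.cong)
    fix a assume "a \<in> Pow S"
    then show "card (Pow (Pow S - {a})) = 2 ^ (2 ^ ?s - 1)"
      using finS by (simp add: card_Pow card_Diff_singleton)
  qed simp
  also have "\<dots> = 2 ^ ?s * 2 ^ (2 ^ ?s - 1)" using finS by (simp add: card_Pow)
  finally have c1: "card (Sigma (Pow S) (\<lambda>a. Pow (Pow S - {a}))) = 2 ^ ?s * 2 ^ (2 ^ ?s - 1)" .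
  have "card LocSet \<le> card (Pow S \<times> Sigma (Pow S) (\<lambda>a. Pow (Pow S - {a})))"
    unfolding LocSetG_def by (rule card_image_le) (use finS f1 in auto)
  also have "\<dots> = 2 ^ ?s * (2 ^ ?s * 2 ^ (2 ^ ?s - 1))"
    using c1 finS by (simp add: card_cartesian_product card_Pow)
  also have "\<dots> = 2 ^ (?s + (?s + (2 ^ ?s - 1)))" by (simp only: power_add)
  also have "?s + (?s + (2 ^ ?s - 1)) = 2 * ?s + 2 ^ ?s - 1"
    using Suc_leI[OF zero_less_power[of 2 ?s]] by simp
  finally show ?thesis unfolding LocSetG_def using finS f1 by auto
qed

lemma sig_count:
  "finite (sig k ` W) \<and> card (sig k ` W) \<le> sexp (2 * (k + 1) * card S) (k + 2)"
proof (induction k)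
  case 0
  have sub: "sig 0 ` W \<subseteq> LocSet \<times> {{}}" using loc_in by auto
  have fin: "finite (LocSet \<times> ({{}} :: 'w set set set))" using LocSet_card by simp
  have "card (sig 0 ` W) \<le> card (LocSet \<times> ({{}} :: 'w set set set))"
    by (rule card_mono[OF fin sub])
  also have "\<dots> = card LocSet" by (simp add: card_cartesian_product)
  also have "\<dots> \<le> 2 ^ (2 * card S + 2 ^ card S - 1)" using LocSet_card by simp
  also have "\<dots> \<le> 2 ^ (2 ^ (2 * card S))" using pow_ineq[of "card S"]
    by (intro power_increasing) auto
  also have "\<dots> = sexp (2 * (0 + 1) * card S) (0 + 2)" by (simp add: numeral_2_eq_2)
  finally show ?case using finite_subset[OF sub fin] by simp
next
  case (Suc k)
  let ?s = "card S"
  define CL where "CL t = {v \<in> W. sig k v = t}" for t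
  define B where "B = sexp (2 * (k + 1) * ?s) (k + 2)"
  have sub: "sig (Suc k) ` W \<subseteq> LocSet \<times> Pow (CL ` (sig k ` W))"
  proof
    fix x assume "x \<in> sig (Suc k) ` W"
    then obtain w where w: "w \<in> W" "x = sig (Suc k) w" by blast
    have "{{v \<in> W. sig k v = sig k u} | u. strict_le le w u} \<subseteq> CL ` (sig k ` W)"
      using le_W unfolding CL_def strict_le_def by blast
    then show "x \<in> LocSet \<times> Pow (CL ` (sig k ` W))" using w loc_in by simp
  qed
  have finI: "finite (CL ` (sig k ` W))" using Suc.IH by simp
  have fin: "finite (LocSet \<times> Pow (CL ` (sig k ` W)))" using LocSet_card finI by simp
  have "card (sig (Suc k) ` W) \<le> card (LocSet \<times> Pow (CL ` (sig k ` W)))"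
    by (rule card_mono[OF fin sub])
  also have "\<dots> = card LocSet * 2 ^ card (CL ` (sig k ` W))"
    using finI by (simp add: card_cartesian_product card_Pow)
  also have "\<dots> \<le> 2 ^ (2 * ?s + 2 ^ ?s - 1) * 2 ^ B"
  proof (rule mult_mono)
    show "card LocSet \<le> 2 ^ (2 * ?s + 2 ^ ?s - 1)" using LocSet_card by simp
    have "card (CL ` (sig k ` W)) \<le> card (sig k ` W)" using Suc.IH card_image_le by blast
    also have "\<dots> \<le> B" using Suc.IH unfolding B_def by simp
    finally show "(2::nat) ^ card (CL ` (sig k ` W)) \<le> 2 ^ B" by (intro power_increasing) auto
  qed auto
  also have "\<dots> = 2 ^ (2 * ?s + 2 ^ ?s - 1 + B)" by (simp add: power_add)
  also have "\<dots> \<le> 2 ^ sexp (2 * (k + 1) * ?s + 2 * ?s) (Suc (k + 1))"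
  proof (intro power_increasing)
    have "sexp (2 * (k + 1) * ?s) (Suc (k + 1)) + 2 ^ (2 * ?s) - 1
          \<le> sexp (2 * (k + 1) * ?s + 2 * ?s) (Suc (k + 1))" by (rule sexp_add2)
    moreover have "B = sexp (2 * (k + 1) * ?s) (Suc (k + 1))" unfolding B_def by simp
    ultimately show "2 * ?s + 2 ^ ?s - 1 + B \<le> sexp (2 * (k + 1) * ?s + 2 * ?s) (Suc (k + 1))"
      using pow_ineq[of ?s] one_le_power[of "2::nat" ?s] one_le_power[of "2::nat" "2 * ?s"] by linarith
  qed auto
  also have "\<dots> = sexp (2 * (Suc k + 1) * ?s) (Suc k + 2)"
    by (simp add: algebra_simps)
  finally show ?case using finite_subset[OF sub fin] by simp
qed

end

lemma bisim_comp:
  assumes "sigma_bisim W Wb le sq V S Z1" "sigma_bisim W Wb le sq V S Z2"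
  shows "sigma_bisim W Wb le sq V S (Z1 O Z2)"
proof -
  have sub: "Z1 O Z2 \<subseteq> W \<times> W" using assms unfolding sigma_bisim_def by blast
  have fc: "forward_confluent le (Z1 O Z2)"
    unfolding forward_confluent_def
  proof (intro allI impI)
    fix w w' v assume h: "(w, w') \<in> le \<and> (w, v) \<in> Z1 O Z2"
    then obtain x where x: "(w, x) \<in> Z1" "(x, v) \<in> Z2" by blast
    obtain x' where x': "(x, x') \<in> le" "(w', x') \<in> Z1"
      using assms(1) h x(1) unfolding sigma_bisim_def forward_confluent_def by blast
    obtain v' where v': "(v, v') \<in> le" "(x', v') \<in> Z2"
      using assms(2) x'(1) x(2) unfolding sigma_bisim_def forward_confluent_def by blast
    show "\<exists>v'. (v, v') \<in> le \<and> (w', v') \<in> Z1 O Z2" using x' v' by blast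
  qed
  have bc: "backward_confluent le (Z1 O Z2)"
    unfolding backward_confluent_def
  proof (intro allI impI)
    fix w v v' assume h: "(w, v) \<in> Z1 O Z2 \<and> (v, v') \<in> le"
    then obtain x where x: "(w, x) \<in> Z1" "(x, v) \<in> Z2" by blast
    obtain x' where x': "(x, x') \<in> le" "(x', v') \<in> Z2"
      using assms(2) h x(2) unfolding sigma_bisim_def backward_confluent_def by blast
    obtain w' where w': "(w, w') \<in> le" "(w', x') \<in> Z1"
      using assms(1) x'(1) x(1) unfolding sigma_bisim_def backward_confluent_def by blast
    show "\<exists>w'. (w, w') \<in> le \<and> (w', v') \<in> Z1 O Z2" using x' w' by blast
  qed
  have lab: "\<forall>w v. (w, v) \<in> Z1 O Z2 \<longrightarrow>
        label_pos W Wb le sq V S w = label_pos W Wb le sq V S v \<and>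
        label_dia W Wb le sq V S w = label_dia W Wb le sq V S v"
    using assms unfolding sigma_bisim_def by (metis relcompE prod.inject)
  show ?thesis unfolding sigma_bisim_def using sub fc bc lab by blast
qed

locale bmh = bm +
  fixes n :: nat
  assumes hn: "\<forall>w\<in>W. hgt_le w n"
begin

definition Z where "Z = {(w, v). w \<in> W \<and> v \<in> W \<and> sig (Suc n) w = sig (Suc n) v}"

lemma sig_n_step: "u \<in> W \<Longrightarrow> u' \<in> W \<Longrightarrow> sig n u = sig n u' \<Longrightarrow> sig (Suc n) u = sig (Suc n) u'"
  using sig_step[of n] hn by blast

lemma fwd:
  assumes "(w, v) \<in> Z" "(w, w') \<in> le"
  shows "\<exists>v'. (v, v') \<in> le \<and> (w', v') \<in> Z"
proof -
  have wW: "w \<in> W" and vW: "v \<in> W" and eq: "sig (Suc n) w = sig (Suc n) v"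
    using assms(1) unfolding Z_def by auto
  have w'W: "w' \<in> W" using assms(2) le_W by blast
  have lpe: "lp w = lp v" and Dce: "Dc w = Dc v" and lde: "ld w = ld v"
    using eq by (auto simp: loc_def)
  have Ue: "{{x \<in> W. sig n x = sig n u} | u. strict_le le w u}
          = {{x \<in> W. sig n x = sig n u} | u. strict_le le v u}" using eq by simp
  show ?thesis
  proof (cases "(w', w) \<in> le")
    case True
    have "ld w' \<in> Dc w" using assms(2) True unfolding Dc_def by blast
    then have "ld w' \<in> Dc v" using Dce by simp
    then obtain v' where v': "(v, v') \<in> le" "(v', v) \<in> le" "ld v' = ld w'"
      unfolding Dc_def by blast
    have v'W: "v' \<in> W" using v'(1) le_W by blast
    have "loc v' = loc w'"
      using cluster_lp[OF v'(1,2)] cluster_Dc[OF v'(1,2)] cluster_lp[OF assms(2) True]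
        cluster_Dc[OF assms(2) True] lpe Dce v'(3) by (simp add: loc_def)
    moreover have "{{x \<in> W. sig n x = sig n u} | u. strict_le le v' u}
          = {{x \<in> W. sig n x = sig n u} | u. strict_le le w' u}"
      using strict_iff[OF v'(1,2)] strict_iff[OF assms(2) True] Ue by simp
    ultimately have "sig (Suc n) w' = sig (Suc n) v'" by simp
    then show ?thesis using v'(1) v'W w'W unfolding Z_def by blast
  next
    case False
    then have st: "strict_le le w w'" using assms(2) unfolding strict_le_def by blast
    then have "{x \<in> W. sig n x = sig n w'} \<in> {{x \<in> W. sig n x = sig n u} | u. strict_le le v u}"
      using Ue by blast
    then obtain v' where v': "strict_le le v v'" "{x \<in> W. sig n x = sig n w'} = {x \<in> W. sig n x = sig n v'}"
      by blast
    have v'W: "v' \<in> W" using v'(1) le_W unfolding strict_le_def by blast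
    have "sig n w' = sig n v'" using v'(2) w'W by blast
    then have "sig (Suc n) w' = sig (Suc n) v'" using sig_n_step w'W v'W by blast
    then show ?thesis using v'(1) v'W w'W unfolding Z_def strict_le_def by blast
  qed
qed

lemma Z_sym: "(w, v) \<in> Z \<Longrightarrow> (v, w) \<in> Z" unfolding Z_def by auto

lemma Z_bisim: "sigma_bisim W Wb le sq V S Z"
proof -
  have "Z \<subseteq> W \<times> W" unfolding Z_def by auto
  moreover have "forward_confluent le Z" unfolding forward_confluent_def using fwd by blast
  moreover have "backward_confluent le Z" unfolding backward_confluent_def
  proof (intro allI impI)
    fix w v v' assume h: "(w, v) \<in> Z \<and> (v, v') \<in> le"
    then obtain w' where "(w, w') \<in> le" "(v', w') \<in> Z" using fwd Z_sym by blast
    then show "\<exists>w'. (w, w') \<in> le \<and> (w', v') \<in> Z" using Z_sym by blast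
  qed
  moreover have "\<forall>w v. (w, v) \<in> Z \<longrightarrow>
        label_pos W Wb le sq V S w = label_pos W Wb le sq V S v \<and>
        label_dia W Wb le sq V S w = label_dia W Wb le sq V S v"
    unfolding Z_def by (auto simp: loc_def lp_def ld_def)
  ultimately show ?thesis unfolding sigma_bisim_def by blast
qed

lemma final:
  "finite (W // sigma_sim W Wb le sq V S) \<and>
   card (W // sigma_sim W Wb le sq V S) \<le> card (sig n ` W)"
proof -
  let ?R = "sigma_sim W Wb le sq V S"
  have ZR: "Z \<subseteq> ?R" using Z_bisim unfolding sigma_sim_def by blast
  have cls: "?R `` {x} \<subseteq> ?R `` {x'}" if "(x, x') \<in> Z" for x x'
  proof
    fix y assume "y \<in> ?R `` {x}"
    then obtain Z2 where Z2: "sigma_bisim W Wb le sq V S Z2" "(x, y) \<in> Z2"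
      unfolding sigma_sim_def by blast
    have "(x', y) \<in> Z O Z2" using Z_sym[OF that] Z2(2) by blast
    moreover have "sigma_bisim W Wb le sq V S (Z O Z2)" using bisim_comp[OF Z_bisim Z2(1)] .
    ultimately show "y \<in> ?R `` {x'}" unfolding sigma_sim_def by blast
  qed
  define g where "g t = ?R `` {SOME x. x \<in> W \<and> sig n x = t}" for t
  have sub: "W // ?R \<subseteq> g ` (sig n ` W)"
  proof
    fix C assume "C \<in> W // ?R"
    then obtain x where x: "x \<in> W" "C = ?R `` {x}" unfolding quotient_def by blast
    define x' where "x' = (SOME x'. x' \<in> W \<and> sig n x' = sig n x)"
    have x': "x' \<in> W \<and> sig n x' = sig n x" unfolding x'_def by (rule someI[of _ x]) (use x in simp)
    then have "sig (Suc n) x = sig (Suc n) x'" using sig_n_step x by metis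
    then have "(x, x') \<in> Z" using x x' unfolding Z_def by simp
    then have "?R `` {x} = ?R `` {x'}" using cls Z_sym by blast
    then show "C \<in> g ` (sig n ` W)" unfolding g_def x'_def using x by blast
  qed
  have fin: "finite (sig n ` W)" using sig_count by blast
  have "card (W // ?R) \<le> card (g ` (sig n ` W))"
    by (rule card_mono[OF _ sub]) (use fin in simp)
  also have "\<dots> \<le> card (sig n ` W)" by (rule card_image_le[OF fin])
  finally show ?thesis using finite_subset[OF sub] fin by blast
qed

end

theorem mainTheorem12:
  fixes W Wb :: "'w set" and le sq :: "('w \<times> 'w) set" and V :: "nat \<Rightarrow> 'w set"
    and \<Sigma> :: "fm set" and n s :: nat
  assumes "bi_model W Wb le sq V"
    and "model_height W le n"
    and "finite \<Sigma>" and "card \<Sigma> = s"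
  shows "finite (W // sigma_sim W Wb le sq V \<Sigma>) \<and>
         card (W // sigma_sim W Wb le sq V \<Sigma>) \<le> sexp (2 * (n + 1) * s) (n + 2)"
proof -
  interpret bm W Wb le sq V \<Sigma> using assms(1,3) by unfold_locales
  interpret bmh W Wb le sq V \<Sigma> n
    by unfold_locales (use assms(2) in \<open>auto simp: model_height_def hgt_le_def\<close>)
  show ?thesis using final sig_count[of n] assms(4) by (meson order.trans)
qed

end
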